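(* Let $R$ be an integral domain and let $Q$ be a u.p.-quandle. Then the quandle ring $R[Q]$ has no zero-divisors.
   Context: A quandle is a non-empty set $Q$ with a binary operation $(x,y)\mapsto xy$ such that $xx=x$ for all $x$; for all $x,y$ there is a unique $z$ with $x=zy$; and $(xy)z=(xz)(yz)$ for all $x,y,z$. The quandle ring $R[Q]$ is the free $R$-module with basis $Q$, with multiplication $\big(\sum_i\alpha_i x_i\big)\big(\sum_j\beta_j x_j\big)=\sum_{i,j}\alpha_i\beta_j (x_ix_j)$. A zero-divisor is a non-zero element $u$ for which there exists a non-zero $v$ with $uv=0$ or $vu=0$. A quandle $Q$ is a u.p.-quandle (unique product quandle) if for any two non-empty finite subsets $A,B\subseteq Q$ there is at least one element $x\in Q$ that has exactly one representation of the form $x=ab$ with $a\in A$, $b\in B$. *)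

theory Defs
  imports Main
begin

definition quandle :: "('q \<Rightarrow> 'q \<Rightarrow> 'q) \<Rightarrow> bool" where
  "quandle op \<longleftrightarrow>
     (\<forall>x. op x x = x) \<and>
     (\<forall>x y. \<exists>!z. x = op z y) \<and>
     (\<forall>x y z. op (op x y) z = op (op x z) (op y z))"

definition up_quandle :: "('q \<Rightarrow> 'q \<Rightarrow> 'q) \<Rightarrow> bool" where
  "up_quandle op \<longleftrightarrow> quandle op \<and>
     (\<forall>A B. finite A \<and> A \<noteq> {} \<and> finite B \<and> B \<noteq> {} \<longrightarrow>
        (\<exists>x. card {(a, b). a \<in> A \<and> b \<in> B \<and> op a b = x} = 1))"

text \<open>Elements of the quandle ring R[Q]: finitely supported coefficient functions.\<close>
definition supp :: "('q \<Rightarrow> 'r::zero) \<Rightarrow> 'q set" where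
  "supp u = {x. u x \<noteq> 0}"

definition qring_elem :: "('q \<Rightarrow> 'r::zero) \<Rightarrow> bool" where
  "qring_elem u \<longleftrightarrow> finite (supp u)"

definition qring_mult :: "('q \<Rightarrow> 'q \<Rightarrow> 'q) \<Rightarrow> ('q \<Rightarrow> 'r::comm_ring_1) \<Rightarrow> ('q \<Rightarrow> 'r) \<Rightarrow> ('q \<Rightarrow> 'r)" where
  "qring_mult op u v = (\<lambda>z. \<Sum>x\<in>supp u. \<Sum>y\<in>supp v. if op x y = z then u x * v y else 0)"

definition qring_zero_divisor :: "('q \<Rightarrow> 'q \<Rightarrow> 'q) \<Rightarrow> ('q \<Rightarrow> 'r::comm_ring_1) \<Rightarrow> bool" where
  "qring_zero_divisor op u \<longleftrightarrow> qring_elem u \<and> u \<noteq> (\<lambda>_. 0) \<and>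
     (\<exists>v. qring_elem v \<and> v \<noteq> (\<lambda>_. 0) \<and> (qring_mult op u v = (\<lambda>_. 0) \<or> qring_mult op v u = (\<lambda>_. 0)))"

end

theory Submission
  imports Defs
begin

lemma mult_nonzero:
  fixes op :: "'q \<Rightarrow> 'q \<Rightarrow> 'q" and u v :: "'q \<Rightarrow> 'r::idom"
  assumes up: "up_quandle op" and fu: "qring_elem u" and fv: "qring_elem v"
    and u0: "u \<noteq> (\<lambda>_. 0)" and v0: "v \<noteq> (\<lambda>_. 0)"
  shows "qring_mult op u v \<noteq> (\<lambda>_. 0)"
proof
  assume h: "qring_mult op u v = (\<lambda>_. 0)"
  let ?A = "supp u" and ?B = "supp v"
  have fA: "finite ?A" and fB: "finite ?B" using fu fv by (auto simp: qring_elem_def)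
  have nA: "?A \<noteq> {}" using u0 by (auto simp: supp_def)
  have nB: "?B \<noteq> {}" using v0 by (auto simp: supp_def)
  obtain x where cx: "card {(a, b). a \<in> ?A \<and> b \<in> ?B \<and> op a b = x} = 1"
    using up fA fB nA nB unfolding up_quandle_def by blast
  then obtain p where p: "{(a, b). a \<in> ?A \<and> b \<in> ?B \<and> op a b = x} = {p}"
    using card_1_singletonE by blast
  obtain a b where ab: "p = (a, b)" by (cases p)
  have mem: "(a,b) \<in> {(a, b). a \<in> ?A \<and> b \<in> ?B \<and> op a b = x}" using p ab by simp
  have S: "{q \<in> ?A \<times> ?B. op (fst q) (snd q) = x} = {(a,b)}"
  proof -
    have "{q \<in> ?A \<times> ?B. op (fst q) (snd q) = x} = {(a, b). a \<in> ?A \<and> b \<in> ?B \<and> op a b = x}" by auto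
    thus ?thesis using p ab by simp
  qed
  have "qring_mult op u v x = (\<Sum>q\<in>?A \<times> ?B. if op (fst q) (snd q) = x then u (fst q) * v (snd q) else 0)"
    unfolding qring_mult_def by (simp add: sum.cartesian_product case_prod_beta)
  also have "\<dots> = (\<Sum>q\<in>{q \<in> ?A \<times> ?B. op (fst q) (snd q) = x}. u (fst q) * v (snd q))"
    using fA fB by (simp add: sum.inter_filter)
  also have "\<dots> = u a * v b" using S by simp
  finally have "qring_mult op u v x = u a * v b" .
  moreover from mem have "u a \<noteq> 0" "v b \<noteq> 0" by (auto simp: supp_def)
  ultimately have "qring_mult op u v x \<noteq> 0" by simp
  with h show False by simp
qed

theorem proposition3p3:
  fixes op :: "'q \<Rightarrow> 'q \<Rightarrow> 'q"
  assumes "up_quandle op"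
  shows "\<not> (\<exists>u :: 'q \<Rightarrow> 'r::idom. qring_zero_divisor op u)"
  using mult_nonzero[OF assms] unfolding qring_zero_divisor_def by blast

end
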